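(* For every $n\geq 1$, $$P_n(a_1,\dots,a_n;x_1,\dots,x_n) = \frac{1}{\prod_{i=1}^n x_i}\sum_{\sigma\in S_n}\frac{\exp\big(\sum_{i<j} w_{\sigma(i)\sigma(j)}\big)}{\prod_{j=1}^{n-1} u_{\sigma(j)\sigma(j+1)}},$$ where $w_{jk}:=(a_jx_k-a_kx_j)/2$ and $u_{jk}:=a_j/x_j-a_k/x_k$ (an identity of meromorphic functions of $a_1,\dots,a_n,x_1,\dots,x_n$).
   Context: Let $\zeta(x) := e^{x/2}-e^{-x/2}$. Define $P_1(a_1;x_1):=1/x_1$ and, for $n\geq 2$, $$P_n(a_1,\dots,a_n;x_1,\dots,x_n) := \sum_{\substack{\tau\in S_n\\ \tau(1)=1}} \frac{\prod_{j=2}^{n-1} x_{\tau(j)} \prod_{j=1}^{n-1}\zeta\Big(\big(\sum_{k=1}^{j} a_{\tau(k)}\big)x_{\tau(j+1)} - a_{\tau(j+1)}\big(\sum_{k=1}^{j} x_{\tau(k)}\big)\Big)}{\prod_{j=1}^{n-1}\big(a_{\tau(j)}x_{\tau(j+1)} - a_{\tau(j+1)}x_{\tau(j)}\big)}.$$ *)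

theory Defs
  imports Complex_Main "HOL-Combinatorics.Permutations"
begin

definition zeta :: "complex \<Rightarrow> complex" where
  "zeta z = exp (z / 2) - exp (- z / 2)"

definition P :: "nat \<Rightarrow> (nat \<Rightarrow> complex) \<Rightarrow> (nat \<Rightarrow> complex) \<Rightarrow> complex" where
  "P n a x =
    (if n = 1 then 1 / x 1
     else \<Sum>\<tau>\<in>{\<tau>. \<tau> permutes {1..n} \<and> \<tau> 1 = 1}.
        ((\<Prod>j=2..n-1. x (\<tau> j)) *
         (\<Prod>j=1..n-1. zeta ((\<Sum>k=1..j. a (\<tau> k)) * x (\<tau> (j+1))
                              - a (\<tau> (j+1)) * (\<Sum>k=1..j. x (\<tau> k)))))
        / (\<Prod>j=1..n-1. a (\<tau> j) * x (\<tau> (j+1)) - a (\<tau> (j+1)) * x (\<tau> j)))"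

definition w :: "(nat \<Rightarrow> complex) \<Rightarrow> (nat \<Rightarrow> complex) \<Rightarrow> nat \<Rightarrow> nat \<Rightarrow> complex" where
  "w a x j k = (a j * x k - a k * x j) / 2"

definition u :: "(nat \<Rightarrow> complex) \<Rightarrow> (nat \<Rightarrow> complex) \<Rightarrow> nat \<Rightarrow> nat \<Rightarrow> complex" where
  "u a x j k = a j / x j - a k / x k"

end

theory Submission
  imports Defs "HOL-Combinatorics.Multiset_Permutations"
begin


fun chainL :: "(nat\<Rightarrow>complex) \<Rightarrow> (nat\<Rightarrow>complex) \<Rightarrow> nat list \<Rightarrow> complex" where
  "chainL a x (p # q # ys) = chainL a x (q # ys) / u a x p q"
| "chainL a x _ = 1"

fun merge :: "bool list \<Rightarrow> 'a list \<Rightarrow> 'a list \<Rightarrow> 'a list" where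
  "merge [] L R = []"
| "merge (b # e) L R = (if b then hd R # merge e L (tl R) else hd L # merge e (tl L) R)"

definition patterns :: "nat \<Rightarrow> nat \<Rightarrow> bool list set" where
  "patterns p q = {e. length (filter Not e) = p \<and> length (filter (\<lambda>b. b) e) = q}"

lemma patterns_0L: "patterns 0 q = {replicate q True}"
proof -
  have "e \<in> patterns 0 q \<longleftrightarrow> e = replicate q True" for e
  proof (induction e arbitrary: q)
    case Nil then show ?case by (auto simp: patterns_def)
  next
    case (Cons b e) then show ?case by (cases q; cases b; auto simp: patterns_def)
  qed
  then show ?thesis by auto
qed

lemma patterns_0R: "patterns p 0 = {replicate p False}"
proof -
  have "e \<in> patterns p 0 \<longleftrightarrow> e = replicate p False" for e
  proof (induction e arbitrary: p)
    case Nil then show ?case by (auto simp: patterns_def)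
  next
    case (Cons b e) then show ?case by (cases p; cases b; auto simp: patterns_def)
  qed
  then show ?thesis by auto
qed

lemma patterns_SS: "patterns (Suc p) (Suc q) = Cons False ` patterns p (Suc q) \<union> Cons True ` patterns (Suc p) q"
proof -
  have "e \<in> patterns (Suc p) (Suc q) \<longleftrightarrow> e \<in> Cons False ` patterns p (Suc q) \<union> Cons True ` patterns (Suc p) q" for e
    by (cases e) (auto simp: patterns_def)
  then show ?thesis by blast
qed

lemma finite_patterns: "finite (patterns p q)"
proof -
  have "patterns p q \<subseteq> {e. length e = p + q}"
  proof
    fix e assume "e \<in> patterns p q"
    moreover have "length (filter (\<lambda>b. b) e) + length (filter (\<lambda>b. \<not> b) e) = length e"
      by (rule sum_length_filter_compl)
    ultimately show "e \<in> {e. length e = p + q}" by (simp add: patterns_def)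
  qed
  then show ?thesis by (rule finite_subset) (use finite_lists_length_eq[of "UNIV :: bool set" "p + q"] in simp)
qed

lemma merge_repT: "merge (replicate (length R) True) [] R = R"
  by (induction R) auto

lemma merge_repF: "merge (replicate (length L) False) L [] = L"
  by (induction L) auto

lemma partial_frac:
  fixes B :: "nat \<Rightarrow> complex"
  assumes "B c - B l \<noteq> 0" "B c - B r \<noteq> 0" "B l - B r \<noteq> 0"
  shows "X / ((B c - B l) * (B l - B r)) + X / ((B c - B r) * (B r - B l)) = X / ((B c - B l) * (B c - B r))"
proof -
  define C L R where "C = B c" "L = B l" "R = B r"
  have h: "C - L \<noteq> 0" "C - R \<noteq> 0" "L - R \<noteq> 0" "R - L \<noteq> 0" using assms unfolding C_L_R_def by auto
  have "X / ((C - L) * (L - R)) + X / ((C - R) * (R - L)) = X / ((C - L) * (C - R))"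
    using h by (simp add: divide_simps) (simp add: algebra_simps)
  then show ?thesis unfolding C_L_R_def .
qed

lemma shuffle:
  assumes "distinct (c # L @ R)"
    and "\<forall>p\<in>set (c # L @ R). \<forall>q\<in>set (c # L @ R). p \<noteq> q \<longrightarrow> u a x p q \<noteq> 0"
  shows "(\<Sum>e\<in>patterns (length L) (length R). chainL a x (c # merge e L R)) = chainL a x (c # L) * chainL a x (c # R)"
  using assms
proof (induction L arbitrary: c R)
  case Nil
  then show ?case by (simp add: patterns_0L merge_repT)
next
  case (Cons l L')
  note outer = Cons.IH
  from Cons.prems show ?case
  proof (induction R arbitrary: c)
    case Nil
    then show ?case using merge_repF[of "l # L'"] by (simp add: patterns_0R del: replicate.simps)
  next
    case (Cons r R')
    have d1: "(\<Sum>e\<in>patterns (length L') (length (r # R')). chainL a x (l # merge e L' (r # R'))) = chainL a x (l # L') * chainL a x (l # r # R')"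
      by (rule outer) (use Cons.prems in auto)
    have d2: "(\<Sum>e\<in>patterns (length (l # L')) (length R'). chainL a x (r # merge e (l # L') R')) = chainL a x (r # l # L') * chainL a x (r # R')"
      by (rule Cons.IH) (use Cons.prems in auto)
    have disj: "Cons False ` patterns (length L') (Suc (length R')) \<inter> Cons True ` patterns (Suc (length L')) (length R') = {}"
      by auto
    have "(\<Sum>e\<in>patterns (length (l # L')) (length (r # R')). chainL a x (c # merge e (l # L') (r # R')))
      = (\<Sum>e\<in>patterns (length L') (Suc (length R')). chainL a x (c # merge (False # e) (l # L') (r # R')))
      + (\<Sum>e\<in>patterns (Suc (length L')) (length R'). chainL a x (c # merge (True # e) (l # L') (r # R')))"
      by (simp add: patterns_SS sum.union_disjoint finite_patterns disj sum.reindex del: merge.simps)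
    also have "\<dots> = (\<Sum>e\<in>patterns (length L') (length (r # R')). chainL a x (l # merge e L' (r # R'))) / u a x c l
       + (\<Sum>e\<in>patterns (length (l # L')) (length R'). chainL a x (r # merge e (l # L') R')) / u a x c r"
      by (simp add: sum_divide_distrib)
    also have "\<dots> = chainL a x (l # L') * chainL a x (r # R') / (u a x c l * u a x l r)
        + chainL a x (l # L') * chainL a x (r # R') / (u a x c r * u a x r l)"
      unfolding d1 d2 by (simp add: mult_ac)
    also have "\<dots> = chainL a x (l # L') * chainL a x (r # R') / (u a x c l * u a x c r)"
      unfolding u_def
      apply (rule partial_frac[where B = "\<lambda>i. a i / x i"])
      using Cons.prems by (auto simp: u_def)
    finally show ?case by simp
  qed
qed



fun El :: "(nat\<Rightarrow>complex) \<Rightarrow> (nat\<Rightarrow>complex) \<Rightarrow> nat list \<Rightarrow> complex" where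
  "El a x [] = 0"
| "El a x (y # ys) = (\<Sum>k\<leftarrow>ys. w a x y k) + El a x ys"

fun Zr :: "(nat\<Rightarrow>complex) \<Rightarrow> (nat\<Rightarrow>complex) \<Rightarrow> nat \<Rightarrow> nat list \<Rightarrow> complex" where
  "Zr a x c [] = 1"
| "Zr a x c (y # ys) = Zr a x c ys * zeta (2 * (\<Sum>k\<leftarrow>c # rev ys. w a x k y))"

definition Zl :: "(nat\<Rightarrow>complex) \<Rightarrow> (nat\<Rightarrow>complex) \<Rightarrow> nat \<Rightarrow> nat list \<Rightarrow> complex" where
  "Zl a x c t = Zr a x c (rev t)"

lemma Zl_Nil [simp]: "Zl a x c [] = 1" by (simp add: Zl_def)
lemma Zl_snoc: "Zl a x c (t @ [y]) = Zl a x c t * zeta (2 * (\<Sum>k\<leftarrow>c # t. w a x k y))"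
  by (simp add: Zl_def)

definition Lp :: "bool list \<Rightarrow> 'a list \<Rightarrow> 'a list" where
  "Lp e t = map snd (filter (\<lambda>p. \<not> fst p) (zip e t))"
definition Rp :: "bool list \<Rightarrow> 'a list \<Rightarrow> 'a list" where
  "Rp e t = map snd (filter fst (zip e t))"
definition sig :: "'a \<Rightarrow> 'a list \<Rightarrow> bool list \<Rightarrow> 'a list" where
  "sig c t e = rev (Lp e t) @ c # Rp e t"
definition sgnE :: "bool list \<Rightarrow> complex" where
  "sgnE e = (-1) ^ length (filter Not e)"

lemma El_snoc: "El a x (xs @ [y]) = El a x xs + (\<Sum>k\<leftarrow>xs. w a x k y)"
  by (induction xs) (auto simp: algebra_simps)

lemma w_antisym: "w a x y k = - w a x k y"
  by (simp add: w_def field_simps)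

lemma mset_LpRp: "length e = length t \<Longrightarrow> mset (Lp e t) + mset (Rp e t) = mset t"
  by (induction e t rule: list_induct2) (auto simp: Lp_def Rp_def)

lemma mset_sig: "length e = length t \<Longrightarrow> mset (sig c t e) = mset (c # t)"
  using mset_LpRp[of e t] by (simp add: sig_def)

lemma sum_list_mset_eq: "mset xs = mset ys \<Longrightarrow> (\<Sum>k\<leftarrow>xs. f k) = (\<Sum>k\<leftarrow>ys. (f k :: complex))"
  by (metis mset_map sum_mset_sum_list)

lemma Lp_snoc: "length e = length t \<Longrightarrow> Lp (e @ [b]) (t @ [y]) = (if b then Lp e t else Lp e t @ [y])"
  by (simp add: Lp_def)
lemma Rp_snoc: "length e = length t \<Longrightarrow> Rp (e @ [b]) (t @ [y]) = (if b then Rp e t @ [y] else Rp e t)"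
  by (simp add: Rp_def)

lemma lists_Suc: "{e :: bool list. length e = Suc m} = (\<lambda>e. e @ [True]) ` {e. length e = m} \<union> (\<lambda>e. e @ [False]) ` {e. length e = m}"
proof -
  have "e \<in> (\<lambda>e. e @ [True]) ` {e. length e = m} \<union> (\<lambda>e. e @ [False]) ` {e. length e = m}" if "length e = Suc m" for e :: "bool list"
  proof -
    have "e \<noteq> []" using that by auto
    then have e: "e = butlast e @ [last e]" by simp
    show ?thesis
      by (cases "last e") (use that in \<open>(subst e, force)+\<close>)
  qed
  then show ?thesis by auto
qed

lemma zeta2: "zeta (2 * W) = exp W - exp (- W)"
  by (simp add: zeta_def)

lemma expansion:
  "Zl a x c t = (\<Sum>e\<in>{e. length e = length t}. sgnE e * exp (El a x (sig c t e)))"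
proof (induction t rule: rev_induct)
  case Nil
  have "{e :: bool list. length e = 0} = {[]}" by auto
  then show ?case by (simp add: sgnE_def sig_def Lp_def Rp_def)
next
  case (snoc y t)
  define E where "E = {e :: bool list. length e = length t}"
  define W where "W = (\<Sum>k\<leftarrow>c # t. w a x k y)"
  have fin: "finite E" unfolding E_def using finite_lists_length_eq[of "UNIV :: bool set" "length t"] by simp
  have W: "(\<Sum>k\<leftarrow>sig c t e. w a x k y) = W" if "e \<in> E" for e
    unfolding W_def by (rule sum_list_mset_eq) (use that mset_sig in \<open>auto simp: E_def\<close>)
  have W': "(\<Sum>k\<leftarrow>sig c t e. w a x y k) = - W" if "e \<in> E" for e
  proof -
    have "(\<Sum>k\<leftarrow>sig c t e. w a x y k) = (\<Sum>k\<leftarrow>sig c t e. - w a x k y)"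
      by (subst w_antisym) simp
    also have "\<dots> = - (\<Sum>k\<leftarrow>sig c t e. w a x k y)" by (simp add: uminus_sum_list_map o_def)
    finally show ?thesis using W[OF that] by simp
  qed
  have T: "sgnE (e @ [True]) * exp (El a x (sig c (t @ [y]) (e @ [True]))) = sgnE e * exp (El a x (sig c t e)) * exp W"
    if "e \<in> E" for e
  proof -
    have "sig c (t @ [y]) (e @ [True]) = sig c t e @ [y]"
      using that by (simp add: E_def sig_def Lp_snoc Rp_snoc)
    then show ?thesis using W[OF that] by (simp add: El_snoc sgnE_def exp_add)
  qed
  have F: "sgnE (e @ [False]) * exp (El a x (sig c (t @ [y]) (e @ [False]))) = - (sgnE e * exp (El a x (sig c t e)) * exp (- W))"
    if "e \<in> E" for e
  proof -
    have "sig c (t @ [y]) (e @ [False]) = y # sig c t e"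
      using that by (simp add: E_def sig_def Lp_snoc Rp_snoc)
    then show ?thesis using W'[OF that] by (simp add: sgnE_def exp_add[symmetric] algebra_simps)
  qed
  have disj: "(\<lambda>e. e @ [True]) ` E \<inter> (\<lambda>e. e @ [False]) ` E = {}" by auto
  have inj: "inj_on (\<lambda>e. e @ [b]) E" for b :: bool by (auto simp: inj_on_def)
  have "(\<Sum>e\<in>{e. length e = length (t @ [y])}. sgnE e * exp (El a x (sig c (t @ [y]) e)))
      = (\<Sum>e\<in>E. sgnE (e @ [True]) * exp (El a x (sig c (t @ [y]) (e @ [True]))))
      + (\<Sum>e\<in>E. sgnE (e @ [False]) * exp (El a x (sig c (t @ [y]) (e @ [False]))))"
    unfolding length_append_singleton lists_Suc E_def[symmetric]
    by (simp add: sum.union_disjoint fin disj sum.reindex inj)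
  also have "\<dots> = (\<Sum>e\<in>E. sgnE e * exp (El a x (sig c t e))) * (exp W - exp (- W))"
    by (simp add: T F sum_distrib_right sum_subtractf right_diff_distrib sum_negf)
  also have "\<dots> = Zl a x c (t @ [y])"
    by (simp only: Zl_snoc W_def[symmetric] zeta2 snoc.IH E_def)
  finally show ?case ..
qed



definition Lw :: "'a \<Rightarrow> 'a list \<Rightarrow> 'a list" where
  "Lw c s = rev (takeWhile (\<lambda>z. z \<noteq> c) s)"
definition Rw :: "'a \<Rightarrow> 'a list \<Rightarrow> 'a list" where
  "Rw c s = tl (dropWhile (\<lambda>z. z \<noteq> c) s)"

lemma merge_LpRp: "length e = length t \<Longrightarrow> merge e (Lp e t) (Rp e t) = t"
  by (induction e t rule: list_induct2) (auto simp: Lp_def Rp_def)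

lemma LpRp_merge: "e \<in> patterns (length L) (length R) \<Longrightarrow> Lp e (merge e L R) = L \<and> Rp e (merge e L R) = R"
proof (induction e arbitrary: L R)
  case Nil then show ?case by (auto simp: patterns_def Lp_def Rp_def)
next
  case (Cons b e)
  show ?case
  proof (cases b)
    case True
    with Cons.prems obtain r R' where R: "R = r # R'" by (cases R) (auto simp: patterns_def)
    have "e \<in> patterns (length L) (length R')" using Cons.prems True R by (auto simp: patterns_def)
    from Cons.IH[OF this] show ?thesis using True R by (simp add: Lp_def Rp_def)
  next
    case False
    with Cons.prems obtain l L' where L: "L = l # L'" by (cases L) (auto simp: patterns_def)
    have "e \<in> patterns (length L') (length R)" using Cons.prems False L by (auto simp: patterns_def)
    from Cons.IH[OF this] show ?thesis using False L by (simp add: Lp_def Rp_def)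
  qed
qed

lemma length_merge [simp]: "length (merge e L R) = length e"
  by (induction e arbitrary: L R) auto

lemma mset_merge: "e \<in> patterns (length L) (length R) \<Longrightarrow> mset (merge e L R) = mset L + mset R"
  using mset_LpRp[of e "merge e L R"] LpRp_merge[of e L R] by simp

lemma LpRp_patterns: "length e = length t \<Longrightarrow> e \<in> patterns (length (Lp e t)) (length (Rp e t))"
  by (induction e t rule: list_induct2) (auto simp: Lp_def Rp_def patterns_def)

lemma LwRw_sig: "c \<notin> set L \<Longrightarrow> Lw c (rev L @ c # R) = L \<and> Rw c (rev L @ c # R) = R"
proof -
  assume "c \<notin> set L"
  then have h: "\<And>z. z \<in> set (rev L) \<Longrightarrow> z \<noteq> c" by auto
  show ?thesis unfolding Lw_def Rw_def
    using takeWhile_append2[of "rev L" "\<lambda>z. z \<noteq> c" "c # R", OF h] dropWhile_append2[of "rev L" "\<lambda>z. z \<noteq> c" "c # R", OF h]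
    by simp
qed

lemma sig_LwRw: "c \<in> set s \<Longrightarrow> rev (Lw c s) @ c # Rw c s = s"
proof -
  assume "c \<in> set s"
  then have ne: "dropWhile (\<lambda>z. z \<noteq> c) s \<noteq> []" by auto
  then have "hd (dropWhile (\<lambda>z. z \<noteq> c) s) = c" using hd_dropWhile[OF ne] by simp
  then have "c # Rw c s = dropWhile (\<lambda>z. z \<noteq> c) s" using ne unfolding Rw_def by (cases "dropWhile (\<lambda>z. z \<noteq> c) s") auto
  then show ?thesis unfolding Lw_def by simp
qed

lemma chainL_append: "chainL a x (xs @ p # ys) = chainL a x (xs @ [p]) * chainL a x (p # ys)"
proof (induction xs rule: induct_list012)
  case 1 then show ?case by simp
next
  case (2 z) then show ?case by (cases ys) auto
next
  case (3 z1 z2 zs) then show ?case by simp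
qed

lemma u_antisym: "u a x q p = - u a x p q"
  by (simp add: u_def)

lemma chainL_rev: "chainL a x (rev xs) = (-1) ^ (length xs - 1) * chainL a x xs"
proof (induction xs rule: induct_list012)
  case 1 then show ?case by simp
next
  case (2 z) then show ?case by simp
next
  case (3 z1 z2 zs)
  have "chainL a x (rev (z1 # z2 # zs)) = chainL a x (rev zs @ [z2] @ [z1])" by simp
  also have "\<dots> = chainL a x (rev zs @ [z2]) * chainL a x [z2, z1]"
    using chainL_append[of a x "rev zs" z2 "[z1]"] by simp
  also have "\<dots> = (-1) ^ (length zs) * chainL a x (z2 # zs) / u a x z2 z1"
    using 3(2) by simp
  also have "\<dots> = (-1) ^ (length (z1 # z2 # zs) - 1) * chainL a x (z1 # z2 # zs)"
    by (simp add: u_antisym[of a x z2 z1])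
  finally show ?case .
qed

lemma chainL_sig: "chainL a x (rev L @ c # R) = (-1) ^ length L * chainL a x (c # L) * chainL a x (c # R)"
proof -
  have "chainL a x (rev L @ c # R) = chainL a x (rev (c # L)) * chainL a x (c # R)"
    using chainL_append[of a x "rev L" c R] by simp
  moreover have "chainL a x (rev L @ [c]) = (-1) ^ length L * chainL a x (c # L)"
    using chainL_rev[of a x "c # L"] by simp
  ultimately show ?thesis by simp
qed

lemma sgnE_patterns: "e \<in> patterns p q \<Longrightarrow> sgnE e = (-1) ^ p"
  by (simp add: sgnE_def patterns_def)



lemma core:
  assumes fin: "finite S" and cS: "c \<notin> S"
    and inj: "\<forall>p\<in>insert c S. \<forall>q\<in>insert c S. p \<noteq> q \<longrightarrow> u a x p q \<noteq> 0"
  shows "(\<Sum>t\<in>permutations_of_set S. Zl a x c t * chainL a x (c # t))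
       = (\<Sum>s\<in>permutations_of_set (insert c S). exp (El a x s) * chainL a x s)"
proof -
  define A where "A = (SIGMA t:permutations_of_set S. {e :: bool list. length e = length t})"
  define T where "T = (SIGMA s:permutations_of_set (insert c S). patterns (length (Lw c s)) (length (Rw c s)))"
  define G where "G = (\<lambda>(t, e). sgnE e * exp (El a x (sig c t e)) * chainL a x (c # t))"
  define H where "H = (\<lambda>(s, e). sgnE e * exp (El a x s) * chainL a x (c # merge e (Lw c s) (Rw c s)))"
  have finE: "finite {e :: bool list. length e = n}" for n
    using finite_lists_length_eq[of "UNIV :: bool set" n] by simp
  have "(\<Sum>t\<in>permutations_of_set S. Zl a x c t * chainL a x (c # t))
      = (\<Sum>t\<in>permutations_of_set S. \<Sum>e\<in>{e. length e = length t}. sgnE e * exp (El a x (sig c t e)) * chainL a x (c # t))"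
    by (simp add: expansion sum_distrib_right)
  also have "\<dots> = sum G A"
    unfolding A_def G_def by (subst sum.Sigma) (auto simp: finE)
  also have "\<dots> = sum H T"
  proof (rule sum.reindex_bij_witness[where j = "\<lambda>(t, e). (sig c t e, e)" and i = "\<lambda>(s, e). (merge e (Lw c s) (Rw c s), e)"])
    fix te assume "te \<in> A"
    then obtain t e where te: "te = (t, e)" and t: "t \<in> permutations_of_set S" and e: "length e = length t"
      unfolding A_def by auto
    have "set_mset (mset (Lp e t) + mset (Rp e t)) = set_mset (mset t)" using mset_LpRp[OF e] by simp
    then have "set (Lp e t) \<union> set (Rp e t) = set t" by simp
    then have cL: "c \<notin> set (Lp e t)" using t cS by (auto simp: permutations_of_set_def)
    have LR: "Lw c (sig c t e) = Lp e t" "Rw c (sig c t e) = Rp e t"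
      using LwRw_sig[OF cL] by (auto simp: sig_def)
    show "(\<lambda>(s, e). (merge e (Lw c s) (Rw c s), e)) ((\<lambda>(t, e). (sig c t e, e)) te) = te"
      using te LR merge_LpRp[OF e] by simp
    have ms: "mset (sig c t e) = mset (c # t)" by (rule mset_sig[OF e])
    have "sig c t e \<in> permutations_of_set (insert c S)"
    proof (rule permutations_of_setI)
      have "set_mset (mset (sig c t e)) = set_mset (mset (c # t))" using ms by simp
      then show "set (sig c t e) = insert c S" using t by (simp add: permutations_of_set_def)
      have "distinct (c # t)" using t cS by (auto simp: permutations_of_set_def)
      then show "distinct (sig c t e)" using mset_eq_imp_distinct_iff[OF ms] by simp
    qed
    then show "(\<lambda>(t, e). (sig c t e, e)) te \<in> T"
      using te LR LpRp_patterns[OF e] unfolding T_def by simp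
    show "H ((\<lambda>(t, e). (sig c t e, e)) te) = G te"
      using te LR merge_LpRp[OF e] unfolding H_def G_def by simp
  next
    fix se assume "se \<in> T"
    then obtain s e where se: "se = (s, e)" and s: "s \<in> permutations_of_set (insert c S)"
        and e: "e \<in> patterns (length (Lw c s)) (length (Rw c s))"
      unfolding T_def by auto
    have cs: "c \<in> set s" using s by (simp add: permutations_of_set_def)
    note LR = LpRp_merge[OF e]
    show "(\<lambda>(t, e). (sig c t e, e)) ((\<lambda>(s, e). (merge e (Lw c s) (Rw c s), e)) se) = se"
      using se LR sig_LwRw[OF cs] by (simp add: sig_def)
    have ms: "mset (merge e (Lw c s) (Rw c s)) + {#c#} = mset s"
    proof -
      have "mset s = mset (rev (Lw c s) @ c # Rw c s)" using sig_LwRw[OF cs] by simp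
      then show ?thesis using mset_merge[OF e] by simp
    qed
    have "merge e (Lw c s) (Rw c s) \<in> permutations_of_set S"
    proof (rule permutations_of_setI)
      have ds: "distinct s" "set s = insert c S" using s by (auto simp: permutations_of_set_def)
      have m2: "mset (merge e (Lw c s) (Rw c s) @ [c]) = mset s" using ms by simp
      have d2: "distinct (merge e (Lw c s) (Rw c s) @ [c])"
        using mset_eq_imp_distinct_iff[OF m2] ds(1) by simp
      have "set_mset (mset (merge e (Lw c s) (Rw c s) @ [c])) = set_mset (mset s)" using m2 by simp
      then have st: "set (merge e (Lw c s) (Rw c s)) \<union> {c} = insert c S"
        using ds(2) by simp
      show "distinct (merge e (Lw c s) (Rw c s))" using d2 by simp
      show "set (merge e (Lw c s) (Rw c s)) = S" using d2 st cS by auto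
    qed
    moreover have "length e = length (merge e (Lw c s) (Rw c s))" by simp
    ultimately show "(\<lambda>(s, e). (merge e (Lw c s) (Rw c s), e)) se \<in> A"
      using se unfolding A_def by simp
  qed
  also have "\<dots> = (\<Sum>s\<in>permutations_of_set (insert c S). \<Sum>e\<in>patterns (length (Lw c s)) (length (Rw c s)).
        sgnE e * exp (El a x s) * chainL a x (c # merge e (Lw c s) (Rw c s)))"
    unfolding T_def H_def by (subst sum.Sigma) (auto simp: finite_patterns)
  also have "\<dots> = (\<Sum>s\<in>permutations_of_set (insert c S). exp (El a x s) * chainL a x s)"
  proof (rule sum.cong[OF refl])
    fix s assume s: "s \<in> permutations_of_set (insert c S)"
    have cs: "c \<in> set s" using s by (simp add: permutations_of_set_def)
    have ds: "distinct s" "set s = insert c S" using s by (auto simp: permutations_of_set_def)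
    have eqs: "rev (Lw c s) @ c # Rw c s = s" by (rule sig_LwRw[OF cs])
    have m3: "mset (c # Lw c s @ Rw c s) = mset s"
      by (subst eqs[symmetric]) simp
    have dist: "distinct (c # Lw c s @ Rw c s)"
      using mset_eq_imp_distinct_iff[OF m3] ds(1) by simp
    have "set_mset (mset (c # Lw c s @ Rw c s)) = set_mset (mset s)" using m3 by simp
    then have setc: "set (c # Lw c s @ Rw c s) = set s" by simp
    have sh: "(\<Sum>e\<in>patterns (length (Lw c s)) (length (Rw c s)). chainL a x (c # merge e (Lw c s) (Rw c s)))
        = chainL a x (c # Lw c s) * chainL a x (c # Rw c s)"
      by (rule shuffle[OF dist]) (use inj setc ds(2) in auto)
    have "(\<Sum>e\<in>patterns (length (Lw c s)) (length (Rw c s)). sgnE e * exp (El a x s) * chainL a x (c # merge e (Lw c s) (Rw c s)))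
       = (\<Sum>e\<in>patterns (length (Lw c s)) (length (Rw c s)). (-1) ^ length (Lw c s) * exp (El a x s) * chainL a x (c # merge e (Lw c s) (Rw c s)))"
      by (rule sum.cong[OF refl]) (simp add: sgnE_patterns)
    also have "\<dots> = (-1) ^ length (Lw c s) * exp (El a x s) * (chainL a x (c # Lw c s) * chainL a x (c # Rw c s))"
      by (simp add: sum_distrib_left[symmetric] sh)
    also have "\<dots> = exp (El a x s) * chainL a x (rev (Lw c s) @ c # Rw c s)"
      by (simp add: chainL_sig)
    also have "\<dots> = exp (El a x s) * chainL a x s" by (simp add: eqs)
    finally show "(\<Sum>e\<in>patterns (length (Lw c s)) (length (Rw c s)). sgnE e * exp (El a x s) * chainL a x (c # merge e (Lw c s) (Rw c s)))
       = exp (El a x s) * chainL a x s" .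
  qed
  finally show ?thesis .
qed



lemma perm_list_bij:
  "(\<Sum>\<sigma>\<in>{\<sigma>. \<sigma> permutes {m..<N}}. g (map \<sigma> [m..<N])) = (\<Sum>t\<in>permutations_of_set {m..<N}. (g t :: complex))"
proof (rule sum.reindex_bij_witness[where j = "\<lambda>\<sigma>. map \<sigma> [m..<N]" and i = "\<lambda>t k. if k \<in> {m..<N} then t ! (k - m) else k"])
  fix \<sigma> assume "\<sigma> \<in> {\<sigma>. \<sigma> permutes {m..<N}}"
  then have p: "\<sigma> permutes {m..<N}" by simp
  show "(\<lambda>k. if k \<in> {m..<N} then map \<sigma> [m..<N] ! (k - m) else k) = \<sigma>"
  proof
    fix k show "(if k \<in> {m..<N} then map \<sigma> [m..<N] ! (k - m) else k) = \<sigma> k"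
      using permutes_not_in[OF p, of k] by auto
  qed
  have "set (map \<sigma> [m..<N]) = {m..<N}" using permutes_image[OF p] by simp
  moreover have "distinct (map \<sigma> [m..<N])"
    using permutes_inj_on[OF p] by (simp add: distinct_map)
  ultimately show "map \<sigma> [m..<N] \<in> permutations_of_set {m..<N}" by (rule permutations_of_setI)
next
  fix t assume t: "t \<in> permutations_of_set {m..<N}"
  have len: "length t = N - m" using length_finite_permutations_of_set[OF t] by simp
  have st: "set t = {m..<N}" and dt: "distinct t" using t by (auto simp: permutations_of_set_def)
  define f where "f = (\<lambda>k. if k \<in> {m..<N} then t ! (k - m) else k)"
  show "map f [m..<N] = t"
    by (rule nth_equalityI) (auto simp: len f_def)
  have inj: "inj_on f {m..<N}"
  proof (rule inj_onI)
    fix k1 k2 assume k: "k1 \<in> {m..<N}" "k2 \<in> {m..<N}" "f k1 = f k2"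
    then have "t ! (k1 - m) = t ! (k2 - m)" by (simp add: f_def)
    then have "k1 - m = k2 - m" using nth_eq_iff_index_eq[OF dt] k len by auto
    then show "k1 = k2" using k by auto
  qed
  have sub: "f ` {m..<N} \<subseteq> {m..<N}"
  proof
    fix y assume "y \<in> f ` {m..<N}"
    then obtain k where "k \<in> {m..<N}" "y = t ! (k - m)" by (auto simp: f_def)
    then have "y \<in> set t" using len by auto
    then show "y \<in> {m..<N}" using st by simp
  qed
  have "bij_betw f {m..<N} {m..<N}"
    unfolding bij_betw_def using inj endo_inj_surj[OF _ sub inj] by simp
  then have "f permutes {m..<N}" by (rule bij_imp_permutes) (auto simp: f_def)
  then show "f \<in> {\<sigma>. \<sigma> permutes {m..<N}}" by simp
qed simp

lemma El_map: "El a x (map f [m..<N]) = (\<Sum>i\<in>{m..<N}. \<Sum>j\<in>{Suc i..<N}. w a x (f i) (f j))"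
proof (induction "N - m" arbitrary: m)
  case 0 then show ?case by simp
next
  case (Suc d)
  then have mN: "m < N" by simp
  have "El a x (map f [m..<N]) = (\<Sum>k\<leftarrow>map f [Suc m..<N]. w a x (f m) k) + El a x (map f [Suc m..<N])"
    using upt_conv_Cons[OF mN] by simp
  also have "(\<Sum>k\<leftarrow>map f [Suc m..<N]. w a x (f m) k) = (\<Sum>j\<in>{Suc m..<N}. w a x (f m) (f j))"
    by (simp add: interv_sum_list_conv_sum_set_nat o_def)
  also have "El a x (map f [Suc m..<N]) = (\<Sum>i\<in>{Suc m..<N}. \<Sum>j\<in>{Suc i..<N}. w a x (f i) (f j))"
    using Suc by simp
  finally show ?case by (simp add: sum.atLeast_Suc_lessThan[OF mN])
qed

lemma chainL_map: "m \<le> n \<Longrightarrow> chainL a x (map f [m..<Suc n]) = 1 / (\<Prod>j\<in>{m..<n}. u a x (f j) (f (Suc j)))"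
proof (induction "n - m" arbitrary: m)
  case 0 then have "m = n" by simp
  then show ?case by simp
next
  case (Suc d)
  then have mn: "m < n" by simp
  have "map f [Suc m..<Suc n] = f (Suc m) # map f [Suc (Suc m)..<Suc n]"
    using mn by (simp add: upt_conv_Cons del: upt_Suc)
  moreover have "map f [m..<Suc n] = f m # map f [Suc m..<Suc n]"
    using mn by (simp add: upt_conv_Cons del: upt_Suc)
  ultimately have "map f [m..<Suc n] = f m # f (Suc m) # map f [Suc (Suc m)..<Suc n]" by simp
  moreover note \<open>map f [Suc m..<Suc n] = f (Suc m) # map f [Suc (Suc m)..<Suc n]\<close>
  ultimately have "chainL a x (map f [m..<Suc n]) = chainL a x (map f [Suc m..<Suc n]) / u a x (f m) (f (Suc m))"
    by simp
  also have "\<dots> = 1 / (\<Prod>j\<in>{Suc m..<n}. u a x (f j) (f (Suc j))) / u a x (f m) (f (Suc m))"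
    using Suc(1)[of "Suc m"] Suc(2) mn by simp
  finally show ?case by (simp add: prod.atLeast_Suc_lessThan[OF mn])
qed

lemma Zl_map: "Zl a x (f 1) (map f [2..<Suc m]) = (\<Prod>j\<in>{1..<m}. zeta (2 * (\<Sum>k\<in>{1..j}. w a x (f k) (f (Suc j)))))"
proof (induction m)
  case 0 then show ?case by simp
next
  case (Suc m)
  show ?case
  proof (cases "m = 0")
    case True then show ?thesis by simp
  next
    case False
    then have m1: "1 \<le> m" by simp
    have "map f [2..<Suc (Suc m)] = map f [2..<Suc m] @ [f (Suc m)]" using m1 by simp
    then have "Zl a x (f 1) (map f [2..<Suc (Suc m)]) = Zl a x (f 1) (map f [2..<Suc m]) * zeta (2 * (\<Sum>k\<leftarrow>f 1 # map f [2..<Suc m]. w a x k (f (Suc m))))"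
      by (simp add: Zl_snoc)
    also have "f 1 # map f [2..<Suc m] = map f [1..<Suc m]"
      using upt_conv_Cons[of 1 "Suc m"] m1 by (simp add: numeral_2_eq_2 del: upt_Suc)
    also have "(\<Sum>k\<leftarrow>map f [1..<Suc m]. w a x k (f (Suc m))) = (\<Sum>k\<in>{1..m}. w a x (f k) (f (Suc m)))"
      by (simp add: interv_sum_list_conv_sum_set_nat o_def atLeastLessThanSuc_atLeastAtMost del: upt_Suc)
    finally show ?thesis using Suc.IH m1 by (simp add: prod.atLeastLessThan_Suc)
  qed
qed



lemma term_conv:
  fixes n :: nat and a x :: "nat \<Rightarrow> complex" and \<tau> :: "nat \<Rightarrow> nat"
  assumes n2: "n \<ge> 2" and p: "\<tau> permutes {2..<Suc n}"
    and x0: "\<And>i. i \<in> {1..n} \<Longrightarrow> x i \<noteq> 0"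
  shows "((\<Prod>j=2..n-1. x (\<tau> j)) *
         (\<Prod>j=1..n-1. zeta ((\<Sum>k=1..j. a (\<tau> k)) * x (\<tau> (j+1))
                              - a (\<tau> (j+1)) * (\<Sum>k=1..j. x (\<tau> k)))))
        / (\<Prod>j=1..n-1. a (\<tau> j) * x (\<tau> (j+1)) - a (\<tau> (j+1)) * x (\<tau> j))
      = (1 / (\<Prod>i=1..n. x i)) * (Zl a x 1 (map \<tau> [2..<Suc n]) * chainL a x (1 # map \<tau> [2..<Suc n]))"
proof -
  have t1: "\<tau> 1 = 1" using permutes_not_in[OF p, of 1] by simp
  have p1: "\<tau> permutes {1..n}" by (rule permutes_subset[OF p]) auto
  have xt: "x (\<tau> j) \<noteq> 0" if "j \<in> {1..n}" for j
    using x0 permutes_in_image[OF p1, of j] that by simp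
  have I1: "{1..n-1} = {1..<n}" "{2..n-1} = {2..<n}" using n2 by auto
  define Z where "Z = (\<Prod>j=1..n-1. zeta ((\<Sum>k=1..j. a (\<tau> k)) * x (\<tau> (j+1))
                              - a (\<tau> (j+1)) * (\<Sum>k=1..j. x (\<tau> k))))"
  define U where "U = (\<Prod>j\<in>{1..<n}. u a x (\<tau> j) (\<tau> (Suc j)))"
  define M where "M = (\<Prod>j\<in>{2..<n}. x (\<tau> j))"
  have "Zl a x 1 (map \<tau> [2..<Suc n]) = (\<Prod>j\<in>{1..<n}. zeta (2 * (\<Sum>k\<in>{1..j}. w a x (\<tau> k) (\<tau> (Suc j)))))"
    using Zl_map[of a x \<tau> n] t1 by simp
  also have "\<dots> = Z"
    unfolding Z_def I1
  proof (rule prod.cong[OF refl])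
    fix j
    have "2 * (\<Sum>k\<in>{1..j}. w a x (\<tau> k) (\<tau> (Suc j))) = (\<Sum>k\<in>{1..j}. a (\<tau> k) * x (\<tau> (Suc j)) - a (\<tau> (Suc j)) * x (\<tau> k))"
      unfolding w_def sum_divide_distrib[symmetric] by simp
    also have "\<dots> = (\<Sum>k=1..j. a (\<tau> k)) * x (\<tau> (j+1)) - a (\<tau> (j+1)) * (\<Sum>k=1..j. x (\<tau> k))"
      by (simp add: sum_subtractf sum_distrib_left sum_distrib_right)
    finally show "zeta (2 * (\<Sum>k\<in>{1..j}. w a x (\<tau> k) (\<tau> (Suc j)))) = zeta ((\<Sum>k=1..j. a (\<tau> k)) * x (\<tau> (j+1)) - a (\<tau> (j+1)) * (\<Sum>k=1..j. x (\<tau> k)))"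
      by simp
  qed
  finally have ZZ: "Zl a x 1 (map \<tau> [2..<Suc n]) = Z" .
  have "1 # map \<tau> [2..<Suc n] = map \<tau> [1..<Suc n]"
    using upt_conv_Cons[of 1 "Suc n"] n2 t1 by (simp add: numeral_2_eq_2 del: upt_Suc)
  then have CC: "chainL a x (1 # map \<tau> [2..<Suc n]) = 1 / U"
    using chainL_map[of 1 n a x \<tau>] n2 unfolding U_def by (simp del: upt_Suc)
  have D: "(\<Prod>j=1..n-1. a (\<tau> j) * x (\<tau> (j+1)) - a (\<tau> (j+1)) * x (\<tau> j))
      = (\<Prod>j\<in>{1..<n}. x (\<tau> j)) * (\<Prod>j\<in>{1..<n}. x (\<tau> (Suc j))) * U"
    unfolding I1 U_def prod.distrib[symmetric]
  proof (rule prod.cong[OF refl])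
    fix j assume j: "j \<in> {1..<n}"
    have "x (\<tau> j) \<noteq> 0" "x (\<tau> (Suc j)) \<noteq> 0" using xt j by auto
    then show "a (\<tau> j) * x (\<tau> (j+1)) - a (\<tau> (j+1)) * x (\<tau> j) = x (\<tau> j) * x (\<tau> (Suc j)) * u a x (\<tau> j) (\<tau> (Suc j))"
      by (simp add: u_def field_simps)
  qed
  have A1: "(\<Prod>j\<in>{1..<n}. x (\<tau> j)) = x (\<tau> 1) * M"
    unfolding M_def using n2 by (simp add: prod.atLeast_Suc_lessThan numeral_2_eq_2)
  have A2: "(\<Prod>j\<in>{1..<n}. x (\<tau> (Suc j))) = M * x (\<tau> n)"
  proof -
    have "(\<Prod>j\<in>{1..<n}. x (\<tau> (Suc j))) = (\<Prod>j\<in>{Suc 1..<Suc n}. x (\<tau> j))"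
      by (rule prod.shift_bounds_Suc_ivl[symmetric])
    also have "\<dots> = M * x (\<tau> n)" unfolding M_def using n2
      by (simp add: prod.atLeastLessThan_Suc numeral_2_eq_2)
    finally show ?thesis .
  qed
  have X: "(\<Prod>i=1..n. x i) = x (\<tau> 1) * M * x (\<tau> n)"
  proof -
    have "(\<Prod>i=1..n. x i) = (\<Prod>i=1..n. x (\<tau> i))"
      using prod.permute[OF p1, of x] by (simp add: o_def)
    also have "\<dots> = (\<Prod>i\<in>{1..<Suc n}. x (\<tau> i))" by (simp add: atLeastLessThanSuc_atLeastAtMost)
    also have "\<dots> = x (\<tau> 1) * (\<Prod>i\<in>{2..<Suc n}. x (\<tau> i))"
      using n2 by (simp add: prod.atLeast_Suc_lessThan numeral_2_eq_2 del: prod.op_ivl_Suc)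
    also have "(\<Prod>i\<in>{2..<Suc n}. x (\<tau> i)) = M * x (\<tau> n)" unfolding M_def using n2
      by (simp add: prod.atLeastLessThan_Suc)
    finally show ?thesis by simp
  qed
  have nz: "x (\<tau> 1) \<noteq> 0" "x (\<tau> n) \<noteq> 0" "M \<noteq> 0"
    using xt n2 by (auto simp: M_def)
  show ?thesis
    unfolding ZZ CC D A1 A2 X I1(2) M_def[symmetric] Z_def[symmetric]
    using nz by (cases "U = 0") (simp_all add: field_simps)
qed



theorem proposition3p1:
  fixes n :: nat and a x :: "nat \<Rightarrow> complex"
  assumes "n \<ge> 1"
    and "\<And>i. i \<in> {1..n} \<Longrightarrow> x i \<noteq> 0"
    and "\<And>i j. i \<in> {1..n} \<Longrightarrow> j \<in> {1..n} \<Longrightarrow> i \<noteq> j \<Longrightarrow> a i * x j \<noteq> a j * x i"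
  shows "P n a x =
    (1 / (\<Prod>i=1..n. x i)) *
    (\<Sum>\<sigma>\<in>{\<sigma>. \<sigma> permutes {1..n}}.
        exp (\<Sum>i=1..n. \<Sum>j=i+1..n. w a x (\<sigma> i) (\<sigma> j))
        / (\<Prod>j=1..n-1. u a x (\<sigma> j) (\<sigma> (j+1))))"
proof -
  note n1 = assms(1) and x0 = assms(2)
  have I: "{1..n} = {1..<Suc n}" by auto
  have u0: "\<forall>p\<in>insert 1 {2..<Suc n}. \<forall>q\<in>insert 1 {2..<Suc n}. p \<noteq> q \<longrightarrow> u a x p q \<noteq> 0"
  proof (intro ballI impI)
    fix p q assume pq: "p \<in> insert 1 {2..<Suc n}" "q \<in> insert 1 {2..<Suc n}" "p \<noteq> q"
    then have pq': "p \<in> {1..n}" "q \<in> {1..n}" using n1 by auto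
    have xp: "x p \<noteq> 0" "x q \<noteq> 0" using x0 pq' by auto
    show "u a x p q \<noteq> 0"
    proof
      assume "u a x p q = 0"
      then have "a p / x p = a q / x q" by (simp add: u_def)
      then have "a p * x q = a q * x p" using xp by (simp add: field_simps)
      then show False using assms(3)[OF pq' pq(3)] by simp
    qed
  qed
  have ins: "insert 1 {2..<Suc n} = {1..<Suc n}" using n1 by auto
  have core': "(\<Sum>t\<in>permutations_of_set {2..<Suc n}. Zl a x 1 t * chainL a x (1 # t))
      = (\<Sum>s\<in>permutations_of_set {1..<Suc n}. exp (El a x s) * chainL a x s)"
    using core[of "{2..<Suc n}" 1 a x] u0 unfolding ins by simp
  have RHS: "(\<Sum>\<sigma>\<in>{\<sigma>. \<sigma> permutes {1..n}}.
        exp (\<Sum>i=1..n. \<Sum>j=i+1..n. w a x (\<sigma> i) (\<sigma> j))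
        / (\<Prod>j=1..n-1. u a x (\<sigma> j) (\<sigma> (j+1))))
      = (\<Sum>s\<in>permutations_of_set {1..<Suc n}. exp (El a x s) * chainL a x s)"
  proof -
    have "(\<Sum>\<sigma>\<in>{\<sigma>. \<sigma> permutes {1..n}}.
        exp (\<Sum>i=1..n. \<Sum>j=i+1..n. w a x (\<sigma> i) (\<sigma> j))
        / (\<Prod>j=1..n-1. u a x (\<sigma> j) (\<sigma> (j+1))))
      = (\<Sum>\<sigma>\<in>{\<sigma>. \<sigma> permutes {1..<Suc n}}. exp (El a x (map \<sigma> [1..<Suc n])) * chainL a x (map \<sigma> [1..<Suc n]))"
      unfolding I
    proof (rule sum.cong[OF refl])
      fix \<sigma>
      have "(\<Sum>i\<in>{1..<Suc n}. \<Sum>j=i+1..n. w a x (\<sigma> i) (\<sigma> j)) = El a x (map \<sigma> [1..<Suc n])"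
        unfolding El_map by (simp add: atLeastLessThanSuc_atLeastAtMost)
      moreover have "chainL a x (map \<sigma> [1..<Suc n]) = 1 / (\<Prod>j=1..n-1. u a x (\<sigma> j) (\<sigma> (j+1)))"
      proof -
        have "{1..n-1} = {1..<n}" using n1 by auto
        then show ?thesis using chainL_map[of 1 n a x \<sigma>] n1 by (simp del: upt_Suc)
      qed
      ultimately show "exp (\<Sum>i\<in>{1..<Suc n}. \<Sum>j=i+1..n. w a x (\<sigma> i) (\<sigma> j)) / (\<Prod>j=1..n-1. u a x (\<sigma> j) (\<sigma> (j+1)))
          = exp (El a x (map \<sigma> [1..<Suc n])) * chainL a x (map \<sigma> [1..<Suc n])"
        by simp
    qed
    also have "\<dots> = (\<Sum>s\<in>permutations_of_set {1..<Suc n}. exp (El a x s) * chainL a x s)"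
      by (rule perm_list_bij[where g = "\<lambda>s. exp (El a x s) * chainL a x s"])
    finally show ?thesis .
  qed
  have LHS: "P n a x = (1 / (\<Prod>i=1..n. x i)) * (\<Sum>t\<in>permutations_of_set {2..<Suc n}. Zl a x 1 t * chainL a x (1 # t))"
  proof (cases "n = 1")
    case True
    then show ?thesis by (simp add: P_def)
  next
    case False
    then have n2: "n \<ge> 2" using n1 by simp
    have S: "{\<tau>. \<tau> permutes {1..n} \<and> \<tau> 1 = 1} = {\<tau>. \<tau> permutes {2..<Suc n}}"
    proof (intro set_eqI iffI)
      fix \<tau> assume "\<tau> \<in> {\<tau>. \<tau> permutes {1..n} \<and> \<tau> 1 = 1}"
      then have h: "\<tau> permutes insert 1 {2..<Suc n}" "\<tau> 1 = 1" using ins I by auto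
      from permutes_insert_lemma[OF h(1)] h(2) show "\<tau> \<in> {\<tau>. \<tau> permutes {2..<Suc n}}" by simp
    next
      fix \<tau> assume "\<tau> \<in> {\<tau>. \<tau> permutes {2..<Suc n}}"
      then have h: "\<tau> permutes {2..<Suc n}" by simp
      have "\<tau> permutes {1..n}" by (rule permutes_subset[OF h]) auto
      moreover have "\<tau> 1 = 1" using permutes_not_in[OF h, of 1] by simp
      ultimately show "\<tau> \<in> {\<tau>. \<tau> permutes {1..n} \<and> \<tau> 1 = 1}" by simp
    qed
    have "P n a x = (\<Sum>\<tau>\<in>{\<tau>. \<tau> permutes {2..<Suc n}}.
        (1 / (\<Prod>i=1..n. x i)) * (Zl a x 1 (map \<tau> [2..<Suc n]) * chainL a x (1 # map \<tau> [2..<Suc n])))"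
      unfolding P_def S if_not_P[OF False]
    proof (rule sum.cong[OF refl])
      fix \<tau> assume "\<tau> \<in> {\<tau>. \<tau> permutes {2..<Suc n}}"
      then have h: "\<tau> permutes {2..<Suc n}" by simp
      show "(\<Prod>j = 2..n - 1. x (\<tau> j)) *
             (\<Prod>j = 1..n - 1. zeta ((\<Sum>k = 1..j. a (\<tau> k)) * x (\<tau> (j + 1)) - a (\<tau> (j + 1)) * (\<Sum>k = 1..j. x (\<tau> k)))) /
             (\<Prod>j = 1..n - 1. a (\<tau> j) * x (\<tau> (j + 1)) - a (\<tau> (j + 1)) * x (\<tau> j))
          = (1 / (\<Prod>i=1..n. x i)) * (Zl a x 1 (map \<tau> [2..<Suc n]) * chainL a x (1 # map \<tau> [2..<Suc n]))"
        by (rule term_conv[OF n2 h x0])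
    qed
    also have "\<dots> = (\<Sum>t\<in>permutations_of_set {2..<Suc n}. (1 / (\<Prod>i=1..n. x i)) * (Zl a x 1 t * chainL a x (1 # t)))"
      by (rule perm_list_bij[where g = "\<lambda>t. (1 / (\<Prod>i=1..n. x i)) * (Zl a x 1 t * chainL a x (1 # t))"])
    finally show ?thesis by (simp add: sum_distrib_left)
  qed
  show ?thesis unfolding LHS RHS core' ..
qed

end
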